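(* Let $\varepsilon>0$ be such that $1/\varepsilon\ge 3$ is an integer, and let $I$ be an input of offline Ordered Open End Bin Packing with $n$ items. Let $\mathrm{OPT}'$ be a feasible solution for $I$, of cost $\mathrm{opt}'$, in which every exceeding item has size at least $\varepsilon^2$. Then the minimum cost $\mathrm{opt}_{nice}$ of a nice solution for $I$ satisfies $\mathrm{opt}_{nice}\le (1+\varepsilon)\,\mathrm{opt}'+\frac1\varepsilon$ (in particular, a nice solution exists).
   Context: Ordered Open End Bin Packing (offline): items $1,\dots,n$ with sizes in $(0,1]$ are given as a sequence; a feasible solution partitions the items into bins so that in every bin, the total size of all items except the item of maximum index is strictly below $1$. Cost = number of bins. For a bin whose total size is at least $1$, its exceeding item is its item of maximum index; a bin of total size strictly below $1$ has no exceeding item. A feasible solution $S$ has a certificate $(e_0,e_1,\dots,e_{1/\varepsilon})$ if (1) $0=e_0<e_1\le e_2\le\dots\le e_{1/\varepsilon}=n$ and $e_1,\dots,e_{1/\varepsilon-1}$ are integers, and (2) for every bin $B$ of $S$, either the total size of $B$ is strictly below $1$, or there is an integer $i$ such that the exceeding item of $B$ has index strictly larger than $e_i$ and all other items of $B$ have indices at most $e_i$. A feasible solution is nice if every exceeding item of its bins has size at least $\varepsilon^2$ and it has some certificate. $\mathrm{opt}_{nice}$ denotes the minimum cost among nice solutions. *)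

theory Defs
  imports Complex_Main "HOL-Library.Disjoint_Sets"
begin

definition valid_input :: "nat \<Rightarrow> (nat \<Rightarrow> real) \<Rightarrow> bool" where
  "valid_input n s \<longleftrightarrow> (\<forall>i\<in>{1..n}. 0 < s i \<and> s i \<le> 1)"

definition feasible :: "nat \<Rightarrow> (nat \<Rightarrow> real) \<Rightarrow> nat set set \<Rightarrow> bool" where
  "feasible n s P \<longleftrightarrow> partition_on {1..n} P \<and>
     (\<forall>B\<in>P. (\<Sum>i\<in>B - {Max B}. s i) < 1)"

definition cost :: "nat set set \<Rightarrow> nat" where
  "cost P = card P"

definition has_exceeding :: "(nat \<Rightarrow> real) \<Rightarrow> nat set \<Rightarrow> bool" where
  "has_exceeding s B \<longleftrightarrow> (\<Sum>i\<in>B. s i) \<ge> 1"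

definition exceeding_item :: "nat set \<Rightarrow> nat" where
  "exceeding_item B = Max B"

text \<open>Certificate (e_0,...,e_k), k = 1/eps, as a function e on indices 0..k.
  Since e_0 = 0 and e_k = n are integers too, all entries are naturals.\<close>
definition certificate :: "nat \<Rightarrow> (nat \<Rightarrow> real) \<Rightarrow> nat \<Rightarrow> nat set set \<Rightarrow> (nat \<Rightarrow> nat) \<Rightarrow> bool" where
  "certificate n s k P e \<longleftrightarrow>
     e 0 = 0 \<and> 0 < e 1 \<and> (\<forall>i. 1 \<le> i \<and> i < k \<longrightarrow> e i \<le> e (Suc i)) \<and> e k = n \<and>
     (\<forall>B\<in>P. \<not> has_exceeding s B \<or>
        (\<exists>i\<le>k. exceeding_item B > e i \<and> (\<forall>j\<in>B - {exceeding_item B}. j \<le> e i)))"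

definition exceeding_large :: "(nat \<Rightarrow> real) \<Rightarrow> real \<Rightarrow> nat set set \<Rightarrow> bool" where
  "exceeding_large s eps P \<longleftrightarrow>
     (\<forall>B\<in>P. has_exceeding s B \<longrightarrow> s (exceeding_item B) \<ge> eps\<^sup>2)"

definition nice :: "nat \<Rightarrow> (nat \<Rightarrow> real) \<Rightarrow> real \<Rightarrow> nat \<Rightarrow> nat set set \<Rightarrow> bool" where
  "nice n s eps k P \<longleftrightarrow> feasible n s P \<and> exceeding_large s eps P \<and>
     (\<exists>e. certificate n s k P e)"

definition opt_nice :: "nat \<Rightarrow> (nat \<Rightarrow> real) \<Rightarrow> real \<Rightarrow> nat \<Rightarrow> nat" where
  "opt_nice n s eps k = (LEAST m. \<exists>P. nice n s eps k P \<and> cost P = m)"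

end

theory Submission
  imports Defs
begin

theorem mainTheorem3:
  fixes eps :: real and k n :: nat and s :: "nat \<Rightarrow> real" and OPT' :: "nat set set"
  assumes "eps > 0" and "1 / eps = real k" and "k \<ge> 3"
    and "n \<ge> 1"
    and "valid_input n s"
    and "feasible n s OPT'"
    and "exceeding_large s eps OPT'"
  shows "(\<exists>P. nice n s eps k P) \<and>
         real (opt_nice n s eps k) \<le> (1 + eps) * real (cost OPT') + 1 / eps"
proof -
  have part: "partition_on {1..n} OPT'" and feas: "\<And>B. B\<in>OPT' \<Longrightarrow> (\<Sum>i\<in>B - {Max B}. s i) < 1"
    using assms(6) unfolding feasible_def by auto
  have Bprops: "finite B \<and> B \<noteq> {} \<and> B \<subseteq> {1..n}" if "B \<in> OPT'" for B
    using part that unfolding partition_on_def by (auto intro: finite_subset)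
  have disjP: "B1 \<inter> B2 = {}" if "B1 \<in> OPT'" "B2 \<in> OPT'" "B1 \<noteq> B2" for B1 B2
    using part that unfolding partition_on_def disjoint_def by auto
  have covP: "\<Union>OPT' = {1..n}" using part unfolding partition_on_def by auto
  have finP: "finite OPT'"
    using covP by (metis finite_UnionD finite_atLeastAtMost)
  have snn: "\<And>i. i \<in> {1..n} \<Longrightarrow> 0 \<le> s i" using assms(5) unfolding valid_input_def
    by (meson less_eq_real_def)
  define X where "X = Max ` {B\<in>OPT'. has_exceeding s B}"
  have finX: "finite X" using finP unfolding X_def by simp
  have Xsub: "X \<subseteq> {1..n}" unfolding X_def using Bprops Max_in by blast
  have Xlarge: "s y \<ge> eps\<^sup>2" if "y \<in> X" for y
    using assms(7) that unfolding X_def exceeding_large_def exceeding_item_def by auto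
  have BX: "B \<inter> X = (if has_exceeding s B then {Max B} else {})" if B: "B \<in> OPT'" for B
  proof -
    have "Max B' \<in> B \<Longrightarrow> B' \<in> OPT' \<Longrightarrow> B' = B" for B'
      using disjP[OF B] Bprops Max_in by blast
    then show ?thesis using B Bprops[OF B] Max_in unfolding X_def by auto
  qed
  define xs where "xs = sorted_list_of_set X"
  define m where "m = length xs"
  define x where "x i = xs ! i" for i
  have mX: "m = card X" unfolding m_def xs_def by simp
  have xX: "x i \<in> X" if "i < m" for i
    using that finX unfolding x_def m_def xs_def by (metis nth_mem set_sorted_list_of_set)
  have Xx: "\<exists>i<m. x i = y" if "y \<in> X" for y
    using that finX unfolding x_def m_def xs_def by (metis in_set_conv_nth set_sorted_list_of_set)
  have xmono: "x i < x j" if "i < j" "j < m" for i j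
    using that unfolding x_def m_def xs_def
    by (metis sorted_wrt_nth_less strict_sorted_list_of_set)
  have xinj: "i = j" if "i < m" "j < m" "x i = x j" for i j
    using xmono that by (metis less_irrefl nat_neq_iff)
  have mP: "m \<le> card OPT'"
    unfolding mX X_def using card_image_le[of "{B\<in>OPT'. has_exceeding s B}" Max] card_mono[OF finP, of "{B\<in>OPT'. has_exceeding s B}"] finP by auto
  define g where "g = m div k + 1"
  define F where "F B = (B - X) \<union> {x (i+g) | i. i + g < m \<and> x i \<in> B}" for B
  define P' where "P' = (F ` OPT' \<union> (\<lambda>i. {x i}) ` {i. i < g \<and> i < m}) - {{}}"
  have FA: "F B = B" if "B \<in> OPT'" "\<not> has_exceeding s B" for B
  proof -
    have "B \<inter> X = {}" using BX[OF that(1)] that(2) by simp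
    then show ?thesis using xX unfolding F_def by fastforce
  qed
  have FB: "\<exists>i<m. Max B = x i \<and> F B = (B - {x i}) \<union> (if i+g<m then {x(i+g)} else {})"
    if "B \<in> OPT'" "has_exceeding s B" for B
  proof -
    have BXe: "B \<inter> X = {Max B}" using BX[OF that(1)] that(2) by simp
    then obtain i where i: "i < m" "x i = Max B" using Xx by blast
    have 1: "B - X = B - {x i}" using BXe i by auto
    have 2: "{x (j+g) | j. j + g < m \<and> x j \<in> B} = (if i+g<m then {x(i+g)} else {})"
    proof -
      have "x j \<in> B \<longleftrightarrow> j = i" if "j < m" for j
        using BXe i xX[OF that] xinj[OF that i(1)] by auto
      note iff = this
      show ?thesis
      proof (cases "i+g<m")
        case True
        then show ?thesis using iff i(1) by auto
      next
        case False
        then show ?thesis using iff by auto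
      qed
    qed
    have "F B = (B - {x i}) \<union> (if i+g<m then {x(i+g)} else {})" using 1 2 unfolding F_def by simp
    then have "i < m \<and> Max B = x i \<and> F B = (B - {x i}) \<union> (if i+g<m then {x(i+g)} else {})"
      using i by simp
    then show ?thesis by (rule exI[of _ i])
  qed
  have g1: "g \<ge> 1" unfolding g_def by simp
  have mkg: "m < k * g"
  proof -
    have e1: "k * (m div k) + m mod k = m" by (rule mult_div_mod_eq)
    have "m mod k < k" using assms(3) by simp
    then have "m < k * (m div k) + k" using e1 by linarith
    then show ?thesis unfolding g_def by (simp add: algebra_simps)
  qed
  have Fsub: "F B \<subseteq> {1..n}" if "B \<in> OPT'" for B
    using Bprops[OF that] xX Xsub unfolding F_def by fastforce
  have U: "\<Union>P' = {1..n}"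
  proof
    show "\<Union>P' \<subseteq> {1..n}" using Fsub xX Xsub unfolding P'_def by fastforce
    show "{1..n} \<subseteq> \<Union>P'"
    proof
      fix y assume y: "y \<in> {1..n}"
      then obtain B where B: "B \<in> OPT'" "y \<in> B" using covP by blast
      show "y \<in> \<Union>P'"
      proof (cases "y \<in> X")
        case False
        then have "y \<in> F B" using B unfolding F_def by auto
        then show ?thesis using B unfolding P'_def by blast
      next
        case True
        then obtain j where j: "j < m" "x j = y" using Xx by blast
        show ?thesis
        proof (cases "j < g")
          case True then show ?thesis using j unfolding P'_def by blast
        next
          case False
          define i where "i = j - g"
          have ij: "i + g = j" using False i_def by simp
          have "i < m" using ij j by simp
          then have "x i \<in> {1..n}" using xX Xsub by blast
          then obtain B' where B': "B' \<in> OPT'" "x i \<in> B'" using covP by blast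
          have "y \<in> F B'" unfolding F_def using ij j B' by auto
          then show ?thesis using B' unfolding P'_def by blast
        qed
      qed
    qed
  qed
  have FF: "F B1 \<inter> F B2 = {}" if "B1 \<in> OPT'" "B2 \<in> OPT'" "F B1 \<noteq> F B2" for B1 B2
  proof (rule ccontr)
    assume "F B1 \<inter> F B2 \<noteq> {}"
    then obtain y where y: "y \<in> F B1" "y \<in> F B2" by blast
    have ne: "B1 \<inter> B2 = {}" using disjP that by metis
    show False
    proof (cases "y \<in> X")
      case False
      then show False using y ne unfolding F_def by (auto simp: xX)
    next
      case True
      obtain i1 where "y = x (i1+g)" "i1+g<m" "x i1 \<in> B1" using True y(1) unfolding F_def by auto
      moreover obtain i2 where "y = x (i2+g)" "i2+g<m" "x i2 \<in> B2" using True y(2) unfolding F_def by auto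
      ultimately show False using xinj ne by (metis disjoint_iff add_right_cancel)
    qed
  qed
  have Fs: "x i \<notin> F B" if Fa: "B \<in> OPT'" "i < g" "i < m" for B i
  proof
    assume "x i \<in> F B"
    then obtain j where "x i = x (j+g)" "j+g<m" using xX[OF Fa(3)] unfolding F_def by auto
    then show False using xinj Fa by fastforce
  qed
  have D: "disjoint P'"
    unfolding disjoint_def P'_def
  proof (intro ballI impI)
    fix C1 C2 assume C: "C1 \<in> F ` OPT' \<union> (\<lambda>i. {x i}) ` {i. i < g \<and> i < m} - {{}}"
      "C2 \<in> F ` OPT' \<union> (\<lambda>i. {x i}) ` {i. i < g \<and> i < m} - {{}}" "C1 \<noteq> C2"
    then show "C1 \<inter> C2 = {}" using FF Fs by (auto; blast)
  qed
  have part': "partition_on {1..n} P'"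
    unfolding partition_on_def using U D unfolding P'_def by blast
  define e where "e j = (if j = 0 then 0 else if j < k \<and> j*g \<le> m then x (j*g - 1) else n)" for j
  have xle: "x i \<le> n" "1 \<le> x i" if "i < m" for i using xX[OF that] Xsub by auto
  have goodF: "(\<Sum>y\<in>F B - {Max (F B)}. s y) < 1 \<and> (has_exceeding s (F B) \<longrightarrow> s (Max (F B)) \<ge> eps\<^sup>2 \<and>
      (\<exists>j\<le>k. Max (F B) > e j \<and> (\<forall>y\<in>F B - {Max (F B)}. y \<le> e j)))"
    if B: "B \<in> OPT'" and ne: "F B \<noteq> {}" for B
  proof (cases "has_exceeding s B")
    case False
    then show ?thesis using FA[OF B False] feas[OF B] by simp
  next
    case True
    from FB[OF B True] obtain i where i: "i < m" "Max B = x i"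
      and FBi: "F B = (B - {x i}) \<union> (if i+g<m then {x(i+g)} else {})" by blast
    have finB: "finite B" using Bprops[OF B] by blast
    have fe: "(\<Sum>y\<in>B - {x i}. s y) < 1" using feas[OF B] i by simp
    have Ble: "y \<le> x i" if "y \<in> B" for y using i finB that by (metis Max_ge)
    show ?thesis
    proof (cases "i+g<m")
      case False
      then have FBe: "F B = B - {x i}" using FBi by simp
      have "(\<Sum>y\<in>F B - {Max (F B)}. s y) \<le> (\<Sum>y\<in>B - {x i}. s y)"
        unfolding FBe by (rule sum_mono2) (use finB Bprops[OF B] snn in auto)
      moreover have "\<not> has_exceeding s (F B)" using fe FBe unfolding has_exceeding_def by simp
      ultimately show ?thesis using fe by simp
    next
      case True
      have lt: "x i < x (i+g)" using xmono True g1 by simp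
      have FBe: "F B = insert (x (i+g)) (B - {x i})" using FBi True by simp
      have M: "Max (F B) = x (i+g)" unfolding FBe
        by (rule Max_eqI) (use finB Ble lt in \<open>auto intro: order_trans less_imp_le\<close>)
      have nin: "x (i+g) \<notin> B" using Ble lt by fastforce
      have rest: "F B - {Max (F B)} = B - {x i}" unfolding M using FBe nin by auto
      define j where "j = i div g + 1"
      have dm: "g * (i div g) + i mod g = i" by (rule mult_div_mod_eq)
      have jg: "j*g = g*(i div g) + g" unfolding j_def by (simp add: algebra_simps)
      have "i mod g < g" using g1 by simp
      then have j1: "i < j * g" "j * g \<le> i + g" using dm jg by linarith+
      have "j*g < k*g" using j1 True mkg by linarith
      then have jk: "j < k" by simp
      have j0: "j \<noteq> 0" unfolding j_def by simp
      have jm: "j*g \<le> m" using j1 True by linarith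
      have ej: "e j = x (j*g - 1)" using j0 jk jm unfolding e_def by simp
      have c1: "i \<le> j*g - 1" "j*g - 1 < m" "j*g - 1 < i + g" using j1 True by linarith+
      have a1: "x i \<le> x (j*g - 1)"
      proof (cases "i = j*g - 1")
        case False then show ?thesis using xmono c1 by (simp add: less_imp_le)
      qed simp
      have a2: "x (j*g - 1) < x (i+g)" using xmono c1 True by simp
      show ?thesis
      proof (intro conjI impI)
        show "(\<Sum>y\<in>F B - {Max (F B)}. s y) < 1" using rest fe by simp
        show "s (Max (F B)) \<ge> eps\<^sup>2" using M Xlarge xX True by simp
        show "\<exists>j\<le>k. Max (F B) > e j \<and> (\<forall>y\<in>F B - {Max (F B)}. y \<le> e j)"
          using jk ej a1 a2 M rest Ble by (intro exI[of _ j]) fastforce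
      qed
    qed
  qed
  have goodS: "(\<Sum>y\<in>{x i} - {Max {x i}}. s y) < 1 \<and> (has_exceeding s {x i} \<longrightarrow> s (Max {x i}) \<ge> eps\<^sup>2 \<and>
      (\<exists>j\<le>k. Max {x i} > e j \<and> (\<forall>y\<in>{x i} - {Max {x i}}. y \<le> e j)))" if "i < m" for i
  proof -
    have xi: "x i \<in> X" "1 \<le> x i" using xX[OF that] xle[OF that] by auto
    have e0: "e 0 = 0" by (simp add: e_def)
    have "\<exists>j\<le>k. Max {x i} > e j \<and> (\<forall>y\<in>{x i} - {Max {x i}}. y \<le> e j)"
      using e0 xi(2) by (intro exI[of _ 0]) simp
    then show ?thesis using Xlarge[OF xi(1)] by simp
  qed
  have good: "(\<Sum>y\<in>C - {Max C}. s y) < 1 \<and> (has_exceeding s C \<longrightarrow> s (Max C) \<ge> eps\<^sup>2 \<and>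
      (\<exists>j\<le>k. Max C > e j \<and> (\<forall>y\<in>C - {Max C}. y \<le> e j)))" if "C \<in> P'" for C
  proof -
    from that consider (a) B where "B \<in> OPT'" "C = F B" "F B \<noteq> {}" | (b) i where "i < m" "C = {x i}"
      unfolding P'_def by blast
    then show ?thesis
    proof cases
      case a
      then show ?thesis using goodF[OF a(1) a(3)] by simp
    next
      case b
      then show ?thesis using goodS[OF b(1)] by simp
    qed
  qed
  have cert0: "e 0 = 0 \<and> 0 < e 1 \<and> (\<forall>i. 1 \<le> i \<and> i < k \<longrightarrow> e i \<le> e (Suc i)) \<and> e k = n"
  proof (intro conjI allI impI)
    show "e 0 = 0" by (simp add: e_def)
    show "0 < e 1" using xle g1 assms(4) unfolding e_def by (auto simp: Suc_le_eq)
    show "e k = n" using assms(3) unfolding e_def by simp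
    fix i assume i: "1 \<le> i \<and> i < k"
    show "e i \<le> e (Suc i)"
    proof (cases "Suc i < k \<and> Suc i * g \<le> m")
      case True
      have ig1: "i * g \<ge> 1" using i g1 by simp
      have "i * g \<le> Suc i * g" by simp
      then have "i * g \<le> m" using True by linarith
      moreover have "i * g - 1 < Suc i * g - 1"
      proof -
        have "Suc i * g = g + i*g" by simp
        then show ?thesis using ig1 g1 by linarith
      qed
      moreover have "Suc i * g - 1 < m"
      proof -
        have "Suc i * g = g + i*g" by simp
        then show ?thesis using True g1 by linarith
      qed
      ultimately show ?thesis using True i xmono unfolding e_def by (simp add: less_imp_le)
    next
      case False
      then have "e (Suc i) = n" unfolding e_def by auto
      moreover have "e i \<le> n"
      proof -
        have ig: "i * g \<ge> 1" using i g1 by simp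
        show ?thesis
        proof (cases "i < k \<and> i*g \<le> m")
          case True
          then have "i*g - 1 < m" using ig by linarith
          then show ?thesis using xle True i unfolding e_def by simp
        qed (use i in \<open>simp add: e_def\<close>)
      qed
      ultimately show ?thesis by simp
    qed
  qed
  have niceP': "nice n s eps k P'"
    unfolding nice_def
  proof (intro conjI)
    show "feasible n s P'" unfolding feasible_def using part' good by blast
    show "exceeding_large s eps P'" unfolding exceeding_large_def exceeding_item_def using good by blast
    show "\<exists>e. certificate n s k P' e"
      unfolding certificate_def exceeding_item_def using cert0 good by blast
  qed
  have finS: "finite {i. i < g \<and> i < m}" by simp
  have "card P' \<le> card (F ` OPT' \<union> (\<lambda>i. {x i}) ` {i. i < g \<and> i < m})"
    unfolding P'_def by (rule card_mono) (use finP in auto)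
  also have "\<dots> \<le> card (F ` OPT') + card ((\<lambda>i. {x i}) ` {i. i < g \<and> i < m})" by (rule card_Un_le)
  also have "\<dots> \<le> card OPT' + card {i. i < g \<and> i < m}"
    using card_image_le[OF finP, of F] card_image_le[OF finS, of "\<lambda>i. {x i}"] by linarith
  also have "\<dots> \<le> card OPT' + g"
    using card_mono[of "{..<g}" "{i. i < g \<and> i < m}"] by auto
  finally have cP': "card P' \<le> card OPT' + g" .
  have opt: "opt_nice n s eps k \<le> card P'"
    unfolding opt_nice_def cost_def using niceP' by (intro Least_le) blast
  have kpos: "real k > 0" using assms(3) by simp
  have epsk: "eps = 1 / real k"
  proof -
    have "eps = 1 / (1 / eps)" by simp
    then show ?thesis using assms(2) by metis
  qed
  have "real (m div k) \<le> real m / real k" by (rule of_nat_div_le_of_nat)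
  also have "\<dots> = eps * real m" using epsk by simp
  also have "\<dots> \<le> eps * real (card OPT')" using mP assms(1) by simp
  finally have a: "real (m div k) \<le> eps * real (card OPT')" .
  have b: "1 \<le> 1 / eps" using assms(2,3) by simp
  show ?thesis
  proof
    show "\<exists>P. nice n s eps k P" using niceP' by blast
    have "real (opt_nice n s eps k) \<le> real (card OPT') + real (m div k) + 1"
      using opt cP' unfolding g_def by linarith
    then show "real (opt_nice n s eps k) \<le> (1 + eps) * real (cost OPT') + 1 / eps"
      using a b unfolding cost_def by (simp add: algebra_simps)
  qed
qed
end
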